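(* Let $(X_1,\xi_1),(X_2,\xi_2)$ be marked Dynkin diagrams and $\Delta_i=\Delta_{X_i}$. Then for all $k\ge1$, $$\det Z_k=(k-1)\Delta_1\Delta_2+\big(\det X_1\,\Delta_2+\det X_2\,\Delta_1\big).$$
   Context: A marked Dynkin diagram $(X,\xi)$ is the Dynkin diagram of a symmetrizable generalized Cartan matrix $C(X)$ together with a distinguished node $\xi$; $\det X:=\det C(X)$. $X(-1)$ denotes the diagram obtained from $X$ by deleting $\xi$ and all edges incident to it (with the convention $\det$ of the empty diagram is $1$), and $\Delta_X:=\det X-\det X(-1)$. For $k\ge1$, $Z_k=Z_k(X_1,X_2)$ is the Dynkin diagram obtained from the disjoint union of $X_1$, a path $A_k$ with nodes $1,\dots,k$ (consecutive nodes joined by simple edges) and $X_2$, by adding a simple edge between $\xi_1$ and node $1$ and one between node $k$ and $\xi_2$ (simple edge: Cartan entries $-1,-1$). *)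

theory Defs
  imports "Jordan_Normal_Form.Determinant"
begin

text \<open>A Dynkin diagram is represented by its generalized Cartan matrix, an n x n
integer matrix with nodes 0..n-1. Symmetrizable generalized Cartan matrix:\<close>

definition gcm :: "int mat \<Rightarrow> bool" where
  "gcm A \<longleftrightarrow> A \<in> carrier_mat (dim_row A) (dim_row A) \<and>
     (\<forall>i<dim_row A. A $$ (i,i) = 2) \<and>
     (\<forall>i<dim_row A. \<forall>j<dim_row A. i \<noteq> j \<longrightarrow>
         A $$ (i,j) \<le> 0 \<and> (A $$ (i,j) = 0 \<longleftrightarrow> A $$ (j,i) = 0))"

definition symmetrizable :: "int mat \<Rightarrow> bool" where
  "symmetrizable A \<longleftrightarrow> (\<exists>d :: nat \<Rightarrow> rat. (\<forall>i<dim_row A. d i > 0) \<and>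
     (\<forall>i<dim_row A. \<forall>j<dim_row A. d i * of_int (A $$ (i,j)) = d j * of_int (A $$ (j,i))))"

definition marked_dynkin :: "int mat \<Rightarrow> nat \<Rightarrow> bool" where
  "marked_dynkin A \<xi> \<longleftrightarrow> gcm A \<and> symmetrizable A \<and> \<xi> < dim_row A"

text \<open>X(-1): delete the distinguished node (det of the empty 0x0 matrix is 1).\<close>
definition del_node :: "int mat \<Rightarrow> nat \<Rightarrow> int mat" where
  "del_node A \<xi> = mat_delete A \<xi> \<xi>"

definition Delta :: "int mat \<Rightarrow> nat \<Rightarrow> int" where
  "Delta A \<xi> = det A - det (del_node A \<xi>)"

text \<open>Z_k(X1,X2): nodes 0..n1-1 are X1, n1..n1+k-1 are the path A_k (path node p is
index n1+p-1), n1+k..n1+k+n2-1 are X2. Simple edges join \<xi>1 with path node 1 and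
path node k with \<xi>2.\<close>
definition Zk :: "int mat \<Rightarrow> nat \<Rightarrow> int mat \<Rightarrow> nat \<Rightarrow> nat \<Rightarrow> int mat" where
  "Zk A1 \<xi>1 A2 \<xi>2 k = (let n1 = dim_row A1; n2 = dim_row A2; N = n1 + k + n2 in
     mat N N (\<lambda>(i,j).
       if i < n1 \<and> j < n1 then A1 $$ (i,j)
       else if n1 + k \<le> i \<and> n1 + k \<le> j then A2 $$ (i - (n1+k), j - (n1+k))
       else if n1 \<le> i \<and> i < n1 + k \<and> n1 \<le> j \<and> j < n1 + k then
         (if i = j then 2 else if i = j + 1 \<or> j = i + 1 then -1 else 0)
       else if (i = \<xi>1 \<and> j = n1) \<or> (i = n1 \<and> j = \<xi>1) then -1
       else if (i = n1 + k - 1 \<and> j = n1 + k + \<xi>2) \<or> (i = n1 + k + \<xi>2 \<and> j = n1 + k - 1) then -1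
       else 0))"

end

theory Submission
  imports Defs
begin


lemma mat_delete_row_eq:
  assumes "M \<in> carrier_mat N N" "M' \<in> carrier_mat N N"
    and "\<And>r c. r < N \<Longrightarrow> c < N \<Longrightarrow> r \<noteq> i \<Longrightarrow> M $$ (r,c) = M' $$ (r,c)"
  shows "mat_delete M i j = mat_delete M' i j"
  using assms unfolding mat_delete_def by (intro eq_matI) auto

lemma det_entry_diff:
  fixes M M' :: "'a::comm_ring_1 mat"
  assumes M: "M \<in> carrier_mat N N" and M': "M' \<in> carrier_mat N N" and i: "i < N" and j: "j < N"
    and eq: "\<And>r c. r < N \<Longrightarrow> c < N \<Longrightarrow> (r,c) \<noteq> (i,j) \<Longrightarrow> M $$ (r,c) = M' $$ (r,c)"
  shows "det M = det M' + (M $$ (i,j) - M' $$ (i,j)) * cofactor M i j"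
proof -
  have cof: "cofactor M i c = cofactor M' i c" for c
    unfolding cofactor_def using mat_delete_row_eq[OF M M', of i c] eq by auto
  have "det M = (\<Sum>c<N. M $$ (i,c) * cofactor M i c)" by (rule laplace_expansion_row[OF M i])
  also have "\<dots> = (\<Sum>c<N. M' $$ (i,c) * cofactor M i c) + (M $$ (i,j) - M' $$ (i,j)) * cofactor M i j"
  proof -
    have "(\<Sum>c<N. M $$ (i,c) * cofactor M i c) - (\<Sum>c<N. M' $$ (i,c) * cofactor M i c)
       = (\<Sum>c<N. (M $$ (i,c) - M' $$ (i,c)) * cofactor M i c)"
      by (simp add: sum_subtractf algebra_simps)
    also have "\<dots> = (\<Sum>c\<in>{j}. (M $$ (i,c) - M' $$ (i,c)) * cofactor M i c)"
      by (rule sum.mono_neutral_right) (use j eq i in auto)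
    finally show ?thesis by (simp add: algebra_simps)
  qed
  also have "(\<Sum>c<N. M' $$ (i,c) * cofactor M i c) = det M'"
    using laplace_expansion_row[OF M' i] cof by simp
  finally show ?thesis .
qed





definition glue :: "int mat \<Rightarrow> nat \<Rightarrow> int mat \<Rightarrow> nat \<Rightarrow> int \<Rightarrow> int \<Rightarrow> int mat" where
  "glue A a B b e f = mat (dim_row A + dim_row B) (dim_row A + dim_row B) (\<lambda>(i,j).
     if i < dim_row A \<and> j < dim_row A then A $$ (i,j)
     else if dim_row A \<le> i \<and> dim_row A \<le> j then B $$ (i - dim_row A, j - dim_row A)
     else if i = a \<and> j = dim_row A + b then e
     else if i = dim_row A + b \<and> j = a then f else 0)"

lemma glue_carrier:
  assumes "A \<in> carrier_mat n n" "B \<in> carrier_mat m m"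
  shows "glue A a B b e f \<in> carrier_mat (n+m) (n+m)"
  using assms unfolding glue_def by auto

lemma glue_dim[simp]: "dim_row (glue A a B b e f) = dim_row A + dim_row B"
  "dim_col (glue A a B b e f) = dim_row A + dim_row B"
  unfolding glue_def by auto

lemma glue_index:
  assumes "A \<in> carrier_mat n n" "B \<in> carrier_mat m m" "i < n + m" "j < n + m"
  shows "glue A a B b e f $$ (i,j) = (if i < n \<and> j < n then A $$ (i,j)
     else if n \<le> i \<and> n \<le> j then B $$ (i - n, j - n)
     else if i = a \<and> j = n + b then e
     else if i = n + b \<and> j = a then f else 0)"
proof -
  have dA: "dim_row A = n" and dB: "dim_row B = m" using assms by auto
  have "glue A a B b e f $$ (i,j) = (if i < dim_row A \<and> j < dim_row A then A $$ (i,j)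
     else if dim_row A \<le> i \<and> dim_row A \<le> j then B $$ (i - dim_row A, j - dim_row A)
     else if i = a \<and> j = dim_row A + b then e
     else if i = dim_row A + b \<and> j = a then f else 0)"
    unfolding glue_def using assms(3,4) dA dB by (simp only: index_mat split)
  then show ?thesis unfolding dA .
qed

lemma mat_delete_idx:
  assumes "M \<in> carrier_mat N N" "r < N - 1" "c < N - 1"
  shows "mat_delete M i j $$ (r,c) = M $$ (if r < i then r else Suc r, if c < j then c else Suc c)"
  using assms unfolding mat_delete_def by simp

lemma glue_det:
  assumes A: "A \<in> carrier_mat n n" and B: "B \<in> carrier_mat m m" and a: "a < n" and b: "b < m"
  shows "det (glue A a B b e f) = det A * det B - e * f * det (mat_delete A a a) * det (mat_delete B b b)"
proof -
  define G where "G = (\<lambda>e f. glue A a B b e f)"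
  have dA: "dim_row A = n" "dim_col A = n" using A by auto
  have dB: "dim_row B = m" "dim_col B = m" using B by auto
  have Gc: "G e f \<in> carrier_mat (n+m) (n+m)" for e f unfolding G_def using glue_carrier[OF A B] .
  have G2: "det (G 0 f) = det A * det B" for f
  proof -
    have "G 0 f = four_block_mat A (0\<^sub>m n m) (mat m n (\<lambda>(i,j). if i = b \<and> j = a then f else 0)) B"
      using a b by (intro eq_matI) (auto simp: G_def glue_index[OF A B] four_block_mat_def dA dB)
    then show ?thesis using det_four_block_mat_upper_right_zero[OF A refl _ B] by auto
  qed
  have G3: "det (G e 0) = det A * det B" for e
  proof -
    have "G e 0 = four_block_mat A (mat n m (\<lambda>(i,j). if i = a \<and> j = b then e else 0)) (0\<^sub>m m n) B"
      using a b by (intro eq_matI) (auto simp: G_def glue_index[OF A B] four_block_mat_def dA dB)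
    then show ?thesis using det_four_block_mat_lower_left_zero[OF A _ refl B] by auto
  qed
  define D where "D = (\<lambda>f. mat_delete (G 0 f) a (n+b))"
  have GD: "mat_delete (G e f) a (n+b) = D f" for e f
    unfolding D_def by (rule mat_delete_row_eq[OF Gc Gc]) (auto simp: G_def glue_index[OF A B])
  have step1: "det (G e f) = det (G 0 f) + e * ((-1)^(a+(n+b)) * det (D f))" for e f
  proof -
    have "det (G e f) = det (G 0 f) + (G e f $$ (a,n+b) - G 0 f $$ (a,n+b)) * cofactor (G e f) a (n+b)"
      by (rule det_entry_diff[OF Gc Gc]) (use a b in \<open>auto simp: G_def glue_index[OF A B]\<close>)
    moreover have "G e f $$ (a,n+b) = e" "G 0 f $$ (a,n+b) = 0" using a b by (auto simp: G_def glue_index[OF A B])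
    ultimately show ?thesis by (simp add: cofactor_def GD)
  qed
  have D0: "det (D 0) = 0"
    using step1[of 1 0] G3[of 1] G3[of 0] by simp
  have Dc: "D f \<in> carrier_mat (n+m-1) (n+m-1)" for f unfolding D_def by (rule mat_delete_carrier[OF Gc])
  define P where "P = mat_delete (D 0) (n+b-1) a"
  have Dent: "D f $$ (r,c) = (if r = n+b-1 \<and> c = a then f else D 0 $$ (r,c))"
    if "r < n+m-1" "c < n+m-1" for f r c
  proof -
    define x where "x = (if r < a then r else Suc r)"
    define y where "y = (if c < n+b then c else Suc c)"
    have idx: "D g $$ (r,c) = G 0 g $$ (x, y)" for g
      unfolding D_def x_def y_def by (rule mat_delete_idx[OF Gc that])
    have xy: "x < n+m" "y < n+m" using that unfolding x_def y_def by auto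
    have Gent: "G 0 f $$ (x,y) = (if x = n+b \<and> y = a then f else G 0 0 $$ (x,y))"
      using xy a b by (auto simp: G_def glue_index[OF A B])
    have iff: "(x = n+b \<and> y = a) \<longleftrightarrow> (r = n+b-1 \<and> c = a)"
      using a b unfolding x_def y_def by auto
    show ?thesis unfolding idx using Gent iff by simp
  qed
  have DP: "mat_delete (D f) (n+b-1) a = P" for f
    unfolding P_def by (rule mat_delete_row_eq[OF Dc Dc]) (auto simp: Dent[of _ _ f])
  have step2: "det (D f) = f * ((-1)^((n+b-1)+a) * det P)" for f
  proof -
    have "det (D f) = det (D 0) + (D f $$ (n+b-1,a) - D 0 $$ (n+b-1,a)) * cofactor (D f) (n+b-1) a"
      by (rule det_entry_diff[OF Dc Dc]) (use a b in \<open>auto simp: Dent[of _ _ f]\<close>)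
    moreover have "D f $$ (n+b-1,a) = f" using a b by (subst Dent) auto
    moreover have "D 0 $$ (n+b-1,a) = 0" using a b by (subst Dent) auto
    ultimately show ?thesis using D0 unfolding cofactor_def DP by simp
  qed
  have P4: "P = four_block_mat (mat_delete A a a) (0\<^sub>m (n-1) (m-1)) (0\<^sub>m (m-1) (n-1)) (mat_delete B b b)"
  proof (rule eq_matI)
    have Pc: "P \<in> carrier_mat (n+m-1-1) (n+m-1-1)" unfolding P_def by (rule mat_delete_carrier[OF Dc])
    have nm: "n+m-1-1 = (n-1) + (m-1)" using a b by simp
    show "dim_row P = dim_row (four_block_mat (mat_delete A a a) (0\<^sub>m (n-1) (m-1)) (0\<^sub>m (m-1) (n-1)) (mat_delete B b b))"
      using Pc nm dA dB by simp
    show "dim_col P = dim_col (four_block_mat (mat_delete A a a) (0\<^sub>m (n-1) (m-1)) (0\<^sub>m (m-1) (n-1)) (mat_delete B b b))"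
      using Pc nm dA dB by simp
    fix r c assume "r < dim_row (four_block_mat (mat_delete A a a) (0\<^sub>m (n-1) (m-1)) (0\<^sub>m (m-1) (n-1)) (mat_delete B b b))"
      "c < dim_col (four_block_mat (mat_delete A a a) (0\<^sub>m (n-1) (m-1)) (0\<^sub>m (m-1) (n-1)) (mat_delete B b b))"
    then have r: "r < n - 1 + (m - 1)" and c: "c < n - 1 + (m - 1)" using dA dB by auto
    define r' where "r' = (if r < n+b-1 then r else Suc r)"
    define c' where "c' = (if c < a then c else Suc c)"
    define x where "x = (if r' < a then r' else Suc r')"
    define y where "y = (if c' < n+b then c' else Suc c')"
    have r'b: "r' < n+m-1" unfolding r'_def using r a b by auto
    have c'b: "c' < n+m-1" unfolding c'_def using c a b by auto
    have "P $$ (r,c) = D 0 $$ (r',c')" unfolding P_def r'_def c'_def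
      by (rule mat_delete_idx[OF Dc]) (use r c a b in auto)
    also have "\<dots> = G 0 0 $$ (x,y)" unfolding D_def x_def y_def
      by (rule mat_delete_idx[OF Gc]) (use r'b c'b in auto)
    finally have Pxy: "P $$ (r,c) = G 0 0 $$ (x,y)" .
    have xb: "x < n+m" "y < n+m" using r'b c'b unfolding x_def y_def by auto
    have FB: "four_block_mat (mat_delete A a a) (0\<^sub>m (n-1) (m-1)) (0\<^sub>m (m-1) (n-1)) (mat_delete B b b) $$ (r,c)
      = (if r < n-1 then if c < n-1 then mat_delete A a a $$ (r,c) else 0
         else if c < n-1 then 0 else mat_delete B b b $$ (r - (n-1), c - (n-1)))"
      using r c dA dB by simp
    show "P $$ (r,c) = four_block_mat (mat_delete A a a) (0\<^sub>m (n-1) (m-1)) (0\<^sub>m (m-1) (n-1)) (mat_delete B b b) $$ (r,c)"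
    proof (cases "r < n-1"; cases "c < n-1")
      assume rr: "r < n-1" and cc: "c < n-1"
      have ex: "x = (if r < a then r else Suc r)" unfolding x_def r'_def using rr by auto
      have ey: "y = (if c < a then c else Suc c)" unfolding y_def c'_def using cc a by auto
      have "mat_delete A a a $$ (r,c) = A $$ (if r < a then r else Suc r, if c < a then c else Suc c)"
        by (rule mat_delete_idx[OF A]) (use rr cc in auto)
      moreover have "G 0 0 $$ (x,y) = A $$ (x,y)" using xb rr cc a unfolding ex ey
        by (auto simp: G_def glue_index[OF A B])
      ultimately show ?thesis unfolding Pxy FB using rr cc unfolding ex ey by simp
    next
      assume rr: "r < n-1" and cc: "\<not> c < n-1"
      have "x < n" unfolding x_def r'_def using rr by auto
      moreover have "y \<ge> n" unfolding y_def c'_def using cc a by auto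
      ultimately have "G 0 0 $$ (x,y) = 0" using xb a b by (auto simp: G_def glue_index[OF A B])
      then show ?thesis unfolding Pxy FB using rr cc by simp
    next
      assume rr: "\<not> r < n-1" and cc: "c < n-1"
      have "x \<ge> n" unfolding x_def r'_def using rr a by auto
      moreover have "y < n" unfolding y_def c'_def using cc a by auto
      ultimately have "G 0 0 $$ (x,y) = 0" using xb a b by (auto simp: G_def glue_index[OF A B])
      then show ?thesis unfolding Pxy FB using rr cc by simp
    next
      assume rr: "\<not> r < n-1" and cc: "\<not> c < n-1"
      have ex: "x - n = (if r - (n-1) < b then r - (n-1) else Suc (r - (n-1)))" and xn: "x \<ge> n"
        unfolding x_def r'_def using rr a by auto
      have ey: "y - n = (if c - (n-1) < b then c - (n-1) else Suc (c - (n-1)))" and yn: "y \<ge> n"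
        unfolding y_def c'_def using cc a by auto
      have "mat_delete B b b $$ (r - (n-1), c - (n-1)) = B $$ (if r - (n-1) < b then r - (n-1) else Suc (r - (n-1)),
          if c - (n-1) < b then c - (n-1) else Suc (c - (n-1)))"
        by (rule mat_delete_idx[OF B]) (use rr cc r c in auto)
      moreover have "G 0 0 $$ (x,y) = B $$ (x - n, y - n)" using xb xn yn
        by (auto simp: G_def glue_index[OF A B])
      ultimately show ?thesis unfolding Pxy FB using rr cc unfolding ex ey by simp
    qed
  qed
  have detP: "det P = det (mat_delete A a a) * det (mat_delete B b b)"
    unfolding P4 by (rule det_four_block_mat_upper_right_zero) (use A B in \<open>auto simp: mat_delete_carrier\<close>)
  have sgn: "(-1::int)^(a+(n+b)) * (-1)^((n+b-1)+a) = -1"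
  proof -
    obtain t where t: "n + b = Suc t" using a by (cases "n+b") auto
    have sq: "(-1::int)^k * (-1)^k = 1" for k :: nat by (induct k) auto
    have e1: "a+(n+b) = Suc (a+t)" and e2: "(n+b-1)+a = a+t" using t by auto
    show ?thesis unfolding e1 e2 using sq[of "a+t"] by simp
  qed
  define s1 :: int where "s1 = (-1)^(a+(n+b))"
  define s2 :: int where "s2 = (-1)^((n+b-1)+a)"
  have s12: "s1 * s2 = -1" unfolding s1_def s2_def by (rule sgn)
  have "det (G e f) = det A * det B + e * (s1 * (f * (s2 * det P)))"
    unfolding step1[of e f] G2[of f] step2[of f] s1_def s2_def by (rule refl)
  also have "e * (s1 * (f * (s2 * det P))) = e * f * det P * (s1 * s2)" by (simp only: ac_simps)
  also have "\<dots> = - (e * f * det P)" unfolding s12 by simp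
  finally show ?thesis unfolding G_def detP by (simp add: algebra_simps)
qed



definition pathm :: "nat \<Rightarrow> int mat" where
  "pathm k = mat k k (\<lambda>(i,j). if i = j then 2 else if i = j + 1 \<or> j = i + 1 then -1 else 0)"

lemma pathm_carrier: "pathm k \<in> carrier_mat k k" unfolding pathm_def by auto

lemma pathm_index[simp]: "i < k \<Longrightarrow> j < k \<Longrightarrow>
  pathm k $$ (i,j) = (if i = j then 2 else if i = j + 1 \<or> j = i + 1 then -1 else 0)"
  unfolding pathm_def by auto

lemma pathm_dim[simp]: "dim_row (pathm k) = k" "dim_col (pathm k) = k"
  unfolding pathm_def by auto

lemma one_carrier: "(mat 1 1 (\<lambda>_. 2) :: int mat) \<in> carrier_mat 1 1" by auto

lemma pathm_delete: "mat_delete (pathm (Suc k)) k k = pathm k"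
  unfolding pathm_def mat_delete_def by (intro eq_matI) auto

lemma pathm_Suc: assumes "k \<ge> 1"
  shows "pathm (Suc k) = glue (pathm k) (k-1) (mat 1 1 (\<lambda>_. 2)) 0 (-1) (-1)"
  using assms by (intro eq_matI) (auto simp: glue_index[OF pathm_carrier one_carrier, simplified])

lemma det_pathm: "det (pathm k) = int k + 1"
proof -
  have "det (pathm k) = int k + 1 \<and> det (pathm (Suc k)) = int k + 2"
  proof (induct k)
    case 0
    have "det (pathm 1) = 2"
      by (subst det_single) (auto simp: pathm_def)
    then show ?case by (simp add: pathm_def)
  next
    case (Suc k)
    have "det (pathm (Suc (Suc k))) = det (glue (pathm (Suc k)) k (mat 1 1 (\<lambda>_. 2)) 0 (-1) (-1))"
      using pathm_Suc[of "Suc k"] by simp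
    also have "\<dots> = det (pathm (Suc k)) * det (mat 1 1 (\<lambda>_. 2::int)) - (-1) * (-1) * det (mat_delete (pathm (Suc k)) k k)
       * det (mat_delete (mat 1 1 (\<lambda>_. 2::int)) 0 0)"
      by (rule glue_det[OF pathm_carrier one_carrier]) simp_all
    also have "\<dots> = det (pathm (Suc k)) * 2 - det (pathm k)"
      using pathm_delete[of k] mat_delete_carrier[OF one_carrier, of 0 0] by (simp add: det_single)
    finally have "det (pathm (Suc (Suc k))) = det (pathm (Suc k)) * 2 - det (pathm k)" .
    then show ?case using Suc by simp
  qed
  then show ?thesis by simp
qed



lemma W_delete:
  assumes A2: "A2 \<in> carrier_mat n2 n2" and k: "k \<ge> 1"
  shows "mat_delete (glue (pathm (Suc k)) k A2 x (-1) (-1)) 0 0 = glue (pathm k) (k-1) A2 x (-1) (-1)"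
proof -
  have d: "dim_row A2 = n2" "dim_col A2 = n2" using A2 by auto
  show ?thesis using k by (intro eq_matI) (auto simp: mat_delete_def glue_index[OF pathm_carrier A2] d)
qed

lemma W1_delete:
  assumes A2: "A2 \<in> carrier_mat n2 n2"
  shows "mat_delete (glue (pathm 1) 0 A2 x (-1) (-1)) 0 0 = A2"
  using A2 by (intro eq_matI) (auto simp: mat_delete_def glue_index[OF pathm_carrier A2])

lemma Zk_glue:
  assumes A1: "A1 \<in> carrier_mat n1 n1" and A2: "A2 \<in> carrier_mat n2 n2" and k: "k \<ge> 1" and x1: "x1 < n1"
  shows "Zk A1 x1 A2 x2 k = glue A1 x1 (glue (pathm k) (k-1) A2 x2 (-1) (-1)) 0 (-1) (-1)"
proof -
  define W where "W = glue (pathm k) (k-1) A2 x2 (-1) (-1)"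
  have Wc: "W \<in> carrier_mat (k+n2) (k+n2)" unfolding W_def by (rule glue_carrier[OF pathm_carrier A2])
  have d1: "dim_row A1 = n1" "dim_col A1 = n1" using A1 by auto
  have d2: "dim_row A2 = n2" "dim_col A2 = n2" using A2 by auto
  have dW: "dim_row W = k+n2" "dim_col W = k+n2" using Wc by auto
  have RC: "glue A1 x1 W 0 (-1) (-1) \<in> carrier_mat (n1+(k+n2)) (n1+(k+n2))" by (rule glue_carrier[OF A1 Wc])
  have ZC: "Zk A1 x1 A2 x2 k \<in> carrier_mat (n1+(k+n2)) (n1+(k+n2))" unfolding Zk_def Let_def d1 d2 carrier_mat_def by (simp add: add.assoc)
  have "Zk A1 x1 A2 x2 k = glue A1 x1 W 0 (-1) (-1)"
  proof (rule eq_matI)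
    show "dim_row (Zk A1 x1 A2 x2 k) = dim_row (glue A1 x1 W 0 (-1) (-1))" using ZC RC d1 dW by simp
    show "dim_col (Zk A1 x1 A2 x2 k) = dim_col (glue A1 x1 W 0 (-1) (-1))" using ZC RC d1 dW by simp
    fix i j assume "i < dim_row (glue A1 x1 W 0 (-1) (-1))" "j < dim_col (glue A1 x1 W 0 (-1) (-1))"
    then have i: "i < n1+(k+n2)" and j: "j < n1+(k+n2)" using d1 dW by auto
    have L: "Zk A1 x1 A2 x2 k $$ (i,j) = (if i < n1 \<and> j < n1 then A1 $$ (i,j)
       else if n1 + k \<le> i \<and> n1 + k \<le> j then A2 $$ (i - (n1+k), j - (n1+k))
       else if n1 \<le> i \<and> i < n1 + k \<and> n1 \<le> j \<and> j < n1 + k then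
         (if i = j then 2 else if i = j + 1 \<or> j = i + 1 then -1 else 0)
       else if (i = x1 \<and> j = n1) \<or> (i = n1 \<and> j = x1) then -1
       else if (i = n1 + k - 1 \<and> j = n1 + k + x2) \<or> (i = n1 + k + x2 \<and> j = n1 + k - 1) then -1
       else 0)"
    proof -
      have "i < dim_row A1 + k + dim_row A2" "j < dim_row A1 + k + dim_row A2" using i j d1 d2 by auto
      then have "Zk A1 x1 A2 x2 k $$ (i,j) = (if i < dim_row A1 \<and> j < dim_row A1 then A1 $$ (i,j)
       else if dim_row A1 + k \<le> i \<and> dim_row A1 + k \<le> j then A2 $$ (i - (dim_row A1+k), j - (dim_row A1+k))
       else if dim_row A1 \<le> i \<and> i < dim_row A1 + k \<and> dim_row A1 \<le> j \<and> j < dim_row A1 + k then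
         (if i = j then 2 else if i = j + 1 \<or> j = i + 1 then -1 else 0)
       else if (i = x1 \<and> j = dim_row A1) \<or> (i = dim_row A1 \<and> j = x1) then -1
       else if (i = dim_row A1 + k - 1 \<and> j = dim_row A1 + k + x2) \<or> (i = dim_row A1 + k + x2 \<and> j = dim_row A1 + k - 1) then -1
       else 0)"
        unfolding Zk_def Let_def by (simp only: index_mat split)
      then show ?thesis unfolding d1 .
    qed
    have R: "glue A1 x1 W 0 (-1) (-1) $$ (i,j) = (if i < n1 \<and> j < n1 then A1 $$ (i,j)
     else if n1 \<le> i \<and> n1 \<le> j then W $$ (i - n1, j - n1)
     else if i = x1 \<and> j = n1 + 0 then -1
     else if i = n1 + 0 \<and> j = x1 then -1 else 0)"
      by (rule glue_index[OF A1 Wc i j])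
    have Wi: "W $$ (p,q) = (if p < k \<and> q < k then pathm k $$ (p,q)
     else if k \<le> p \<and> k \<le> q then A2 $$ (p - k, q - k)
     else if p = k-1 \<and> q = k + x2 then -1
     else if p = k + x2 \<and> q = k-1 then -1 else 0)" if "p < k+n2" "q < k+n2" for p q
      unfolding W_def by (rule glue_index[OF pathm_carrier A2 that])
    consider (a) "i < n1 \<and> j < n1" | (b) "n1 \<le> i \<and> n1 \<le> j" | (c) "\<not> (i < n1 \<and> j < n1)" "\<not> (n1 \<le> i \<and> n1 \<le> j)"
      by linarith
    then show "Zk A1 x1 A2 x2 k $$ (i,j) = glue A1 x1 W 0 (-1) (-1) $$ (i,j)"
    proof cases
      case a
      then show ?thesis unfolding L R by simp
    next
      case b
      have p: "i - n1 < k + n2" "j - n1 < k + n2" using i j b by auto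
      show ?thesis
      proof (cases "n1 + k \<le> i \<and> n1 + k \<le> j")
        case b1: True
        have e: "(i < n1 \<and> j < n1) = False" "(n1 + k \<le> i \<and> n1 + k \<le> j) = True"
          "(n1 \<le> i \<and> n1 \<le> j) = True" "(i - n1 < k \<and> j - n1 < k) = False"
          "(k \<le> i - n1 \<and> k \<le> j - n1) = True" "i - n1 - k = i - (n1 + k)" "j - n1 - k = j - (n1 + k)"
          using b b1 by auto
        show ?thesis unfolding L R Wi[OF p] e if_True if_False by (rule refl)
      next
        case nb1: False
        show ?thesis
        proof (cases "i < n1 + k \<and> j < n1 + k")
          case b2: True
          then have ik: "i - n1 < k" "j - n1 < k" using b by auto
          have e: "(i < n1 \<and> j < n1) = False" "(n1 + k \<le> i \<and> n1 + k \<le> j) = False"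
            "(n1 \<le> i \<and> i < n1 + k \<and> n1 \<le> j \<and> j < n1 + k) = True"
            "(n1 \<le> i \<and> n1 \<le> j) = True" "(i - n1 < k \<and> j - n1 < k) = True"
            "(i - n1 = j - n1) = (i = j)" "(i - n1 = j - n1 + 1 \<or> j - n1 = i - n1 + 1) = (i = j + 1 \<or> j = i + 1)"
            using b b2 by auto
          show ?thesis unfolding L R Wi[OF p] pathm_index[OF ik] e if_True if_False by (rule refl)
        next
          case b3: False
          have e: "(i < n1 \<and> j < n1) = False" "(n1 + k \<le> i \<and> n1 + k \<le> j) = False"
            "(n1 \<le> i \<and> i < n1 + k \<and> n1 \<le> j \<and> j < n1 + k) = False"
            "((i = x1 \<and> j = n1) \<or> (i = n1 \<and> j = x1)) = False"
            "(n1 \<le> i \<and> n1 \<le> j) = True" "(i - n1 < k \<and> j - n1 < k) = False"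
            "(k \<le> i - n1 \<and> k \<le> j - n1) = False"
            "(i - n1 = k - 1 \<and> j - n1 = k + x2) = (i = n1 + k - 1 \<and> j = n1 + k + x2)"
            "(i - n1 = k + x2 \<and> j - n1 = k - 1) = (i = n1 + k + x2 \<and> j = n1 + k - 1)"
            using b nb1 b3 x1 k by auto
          show ?thesis unfolding L R Wi[OF p] e if_True if_False by simp
        qed
      qed
    next
      case c
      have e: "(i < n1 \<and> j < n1) = False" "(n1 + k \<le> i \<and> n1 + k \<le> j) = False"
        "(n1 \<le> i \<and> i < n1 + k \<and> n1 \<le> j \<and> j < n1 + k) = False"
        "(n1 \<le> i \<and> n1 \<le> j) = False"
        "((i = n1 + k - 1 \<and> j = n1 + k + x2) \<or> (i = n1 + k + x2 \<and> j = n1 + k - 1)) = False"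
        "n1 + 0 = n1"
        using c k by auto
      show ?thesis unfolding L R e if_True if_False by simp
    qed
  qed
  then show ?thesis unfolding W_def .
qed

lemma det_W:
  assumes A2: "A2 \<in> carrier_mat n2 n2" and x: "x < n2" and k: "k \<ge> 1"
  shows "det (glue (pathm k) (k-1) A2 x (-1) (-1)) = (int k + 1) * det A2 - int k * det (mat_delete A2 x x)"
proof -
  obtain k' where k': "k = Suc k'" using k by (cases k) auto
  have "det (glue (pathm k) (k-1) A2 x (-1) (-1)) = det (pathm k) * det A2 - (-1) * (-1) * det (mat_delete (pathm k) (k-1) (k-1)) * det (mat_delete A2 x x)"
    by (rule glue_det[OF pathm_carrier A2]) (use k x in auto)
  then show ?thesis unfolding k' using pathm_delete[of k'] by (simp add: det_pathm)
qed

lemma det_W_del: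
  assumes A2: "A2 \<in> carrier_mat n2 n2" and x: "x < n2" and k: "k \<ge> 1"
  shows "det (mat_delete (glue (pathm k) (k-1) A2 x (-1) (-1)) 0 0) = int k * det A2 - (int k - 1) * det (mat_delete A2 x x)"
proof (cases "k = 1")
  case True
  then show ?thesis using W1_delete[OF A2] by simp
next
  case False
  then obtain k' where k': "k = Suc k'" "k' \<ge> 1" using k by (cases k) auto
  show ?thesis unfolding k' using W_delete[OF A2 k'(2), of x] det_W[OF A2 x k'(2)] by simp
qed

theorem lemma3p5:
  fixes A1 A2 :: "int mat" and \<xi>1 \<xi>2 k :: nat
  assumes "marked_dynkin A1 \<xi>1" and "marked_dynkin A2 \<xi>2" and "k \<ge> 1"
  shows "det (Zk A1 \<xi>1 A2 \<xi>2 k) =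
    (int k - 1) * Delta A1 \<xi>1 * Delta A2 \<xi>2
    + (det A1 * Delta A2 \<xi>2 + det A2 * Delta A1 \<xi>1)"
proof -
  define n1 where "n1 = dim_row A1"
  define n2 where "n2 = dim_row A2"
  have A1: "A1 \<in> carrier_mat n1 n1" and x1: "\<xi>1 < n1"
    using assms(1) unfolding marked_dynkin_def gcm_def n1_def by auto
  have A2: "A2 \<in> carrier_mat n2 n2" and x2: "\<xi>2 < n2"
    using assms(2) unfolding marked_dynkin_def gcm_def n2_def by auto
  define W where "W = glue (pathm k) (k-1) A2 \<xi>2 (-1) (-1)"
  have Wc: "W \<in> carrier_mat (k+n2) (k+n2)" unfolding W_def by (rule glue_carrier[OF pathm_carrier A2])
  have "det (Zk A1 \<xi>1 A2 \<xi>2 k) = det (glue A1 \<xi>1 W 0 (-1) (-1))"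
    unfolding W_def using Zk_glue[OF A1 A2 assms(3) x1] by simp
  also have "\<dots> = det A1 * det W - (-1) * (-1) * det (mat_delete A1 \<xi>1 \<xi>1) * det (mat_delete W 0 0)"
    by (rule glue_det[OF A1 Wc]) (use x1 assms(3) in auto)
  finally have "det (Zk A1 \<xi>1 A2 \<xi>2 k) = det A1 * ((int k + 1) * det A2 - int k * det (mat_delete A2 \<xi>2 \<xi>2))
     - det (mat_delete A1 \<xi>1 \<xi>1) * (int k * det A2 - (int k - 1) * det (mat_delete A2 \<xi>2 \<xi>2))"
    unfolding W_def using det_W[OF A2 x2 assms(3)] det_W_del[OF A2 x2 assms(3)] by simp
  then show ?thesis unfolding Delta_def del_node_def by (simp add: algebra_simps)
qed


end
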